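(* Suppose $\hat{e}(X_i) \in (0, 1)$ for all $i$, let $\hat{\gamma}$ minimize $\mathcal{L}_n(\gamma) := \mathbb{P}_n \rho_{\tau}(Y - \gamma^{\top} g(X)) Z \tfrac{1 - \hat{e}(X)}{\hat{e}(X)}$ and let $\hat{V}_i = \textup{sign}(Y_i - \hat{\gamma}^{\top} g(X_i))$. Then the optimal objective value of the optimization problem \begin{align*} \max_{\bar{e} \in \mathcal{E}_n(\Lambda)} \frac{\mathbb{P}_n YZ/\bar{e}}{\mathbb{P}_n Z/\hat{e}(X)} \quad \text{subject to} \quad \mathbb{P}_n g(X) Z / \bar{e} = \mathbb{P}_n g(X) Z / \hat{e}(X) \end{align*} is: \begin{align*} \frac{\mathbb{P}_n(Y - \hat{\gamma}^{\top} g(X)) Z(1 + \Lambda^{\hat{V}}(1-\hat{e}(X))/\hat{e}(X)) + \mathbb{P}_n \hat{\gamma}^{\top} g(X) Z / \hat{e}(X)}{\mathbb{P}_n Z / \hat{e}(X)}. \end{align*}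
   Context: We observe i.i.d. samples $(X_i, Y_i, Z_i)$, $i = 1, \dots, n$, with covariates $X_i \in \mathcal{X} \subseteq \mathbb{R}^d$, binary treatment $Z_i \in \{0,1\}$ and real outcome $Y_i$. $\hat{e}(x)$ is an estimate of the nominal propensity score $e(x) = P(Z=1 \mid X=x)$. $\Lambda \geq 1$ is fixed and $\tau = \Lambda/(\Lambda+1)$. $\mathbb{P}_n[\cdot]$ denotes the average $\tfrac{1}{n}\sum_{i=1}^n[\cdot]_i$ (for a vector $v$, $\mathbb{P}_n v = \tfrac1n\sum_i v_i$). The constraint set is $\mathcal{E}_n(\Lambda) = \{ \bar{e} \in \mathbb{R}^n : \Lambda^{-1} \leq \frac{\bar{e}_i/(1-\bar{e}_i)}{\hat{e}(X_i)/(1-\hat{e}(X_i))} \leq \Lambda \text{ for all } i \}$. $g : \mathcal{X} \to \mathbb{R}^k$ is a function containing an ``intercept'' (constant component), e.g. $g(x) = (1, \hat{Q}_\tau(x,1))$ with $\hat{Q}_\tau$ an estimated conditional quantile of $Y$. $\rho_{\tau}(u) = u(\tau - \mathbb{I}\{u < 0\})$ is the quantile regression check function. *)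

theory Defs
  imports "HOL-Analysis.Analysis"
begin

definition Pn :: "nat \<Rightarrow> (nat \<Rightarrow> 'a::real_vector) \<Rightarrow> 'a" where
  "Pn n f = (1 / real n) *\<^sub>R (\<Sum>i<n. f i)"

definition rho :: "real \<Rightarrow> real \<Rightarrow> real" where
  "rho tau u = u * (tau - (if u < 0 then 1 else 0))"

definition Eset :: "nat \<Rightarrow> real \<Rightarrow> (nat \<Rightarrow> real) \<Rightarrow> (nat \<Rightarrow> real) set" where
  "Eset n Lam ehatX = {ebar. \<forall>i<n.
      inverse Lam \<le> (ebar i / (1 - ebar i)) / (ehatX i / (1 - ehatX i)) \<and>
      (ebar i / (1 - ebar i)) / (ehatX i / (1 - ehatX i)) \<le> Lam}"

definition Ln :: "nat \<Rightarrow> real \<Rightarrow> ('d \<Rightarrow> real) \<Rightarrow> ('d \<Rightarrow> real ^ 'k) \<Rightarrow>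
    (nat \<Rightarrow> 'd) \<Rightarrow> (nat \<Rightarrow> real) \<Rightarrow> (nat \<Rightarrow> real) \<Rightarrow> real ^ 'k \<Rightarrow> real" where
  "Ln n tau ehat g X Y Z gamma =
     Pn n (\<lambda>i. rho tau (Y i - gamma \<bullet> g (X i)) * Z i * (1 - ehat (X i)) / ehat (X i))"

end

theory Submission
  imports Defs
begin

lemma rho_dir:
  fixes r u tau :: real
  shows "eventually (\<lambda>t. rho tau (r - t * u) = rho tau r + t *
     (if r > 0 then - (tau * u) else if r < 0 then - ((tau - 1) * u) else rho tau (- u))) (at_right 0)"
  unfolding eventually_at_right_field
proof -
  consider "r > 0" | "r < 0" | "r = 0" by linarith
  then show "\<exists>b>0. \<forall>y>0. y < b \<longrightarrow> rho tau (r - y * u) = rho tau r + y *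
     (if r > 0 then - (tau * u) else if r < 0 then - ((tau - 1) * u) else rho tau (- u))"
  proof cases
    case 1
    show ?thesis
    proof (intro exI[of _ "r / (\<bar>u\<bar> + 1)"] conjI allI impI)
      show "0 < r / (\<bar>u\<bar> + 1)" using 1 by simp
      fix y :: real assume y: "0 < y" "y < r / (\<bar>u\<bar> + 1)"
      have "y * (\<bar>u\<bar> + 1) < r" using y by (simp add: pos_less_divide_eq)
      moreover have "y * u \<le> y * \<bar>u\<bar>" using y by (simp add: mult_left_mono)
      moreover have "y * (\<bar>u\<bar> + 1) = y * \<bar>u\<bar> + y" by (simp add: algebra_simps)
      ultimately have "r - y * u > 0" using y(1) by linarith
      then show "rho tau (r - y * u) = rho tau r + y *
     (if r > 0 then - (tau * u) else if r < 0 then - ((tau - 1) * u) else rho tau (- u))"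
        using 1 by (simp add: rho_def algebra_simps)
    qed
  next
    case 2
    show ?thesis
    proof (intro exI[of _ "- r / (\<bar>u\<bar> + 1)"] conjI allI impI)
      show "0 < - r / (\<bar>u\<bar> + 1)" by (rule divide_pos_pos) (use 2 in auto)
      fix y :: real assume y: "0 < y" "y < - r / (\<bar>u\<bar> + 1)"
      have "y * (\<bar>u\<bar> + 1) < - r"
        using y(2) pos_less_divide_eq[where c="\<bar>u\<bar>+1" and a=y and b="-r"] by linarith
      moreover have "- (y * u) \<le> y * \<bar>u\<bar>" using y
        by (metis abs_ge_minus_self abs_mult abs_of_pos)
      moreover have "y * (\<bar>u\<bar> + 1) = y * \<bar>u\<bar> + y" by (simp add: algebra_simps)
      ultimately have "r - y * u < 0" using y(1) by linarith
      then show "rho tau (r - y * u) = rho tau r + y *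
     (if r > 0 then - (tau * u) else if r < 0 then - ((tau - 1) * u) else rho tau (- u))"
        using 2 by (simp add: rho_def algebra_simps)
    qed
  next
    case 3
    show ?thesis
    proof (intro exI[of _ 1] conjI allI impI)
      fix y :: real assume y: "0 < y" "y < 1"
      have "(- (y * u) < 0) = (- u < 0)" using y
        by (simp add: zero_less_mult_iff)
      then show "rho tau (r - y * u) = rho tau r + y *
     (if r > 0 then - (tau * u) else if r < 0 then - ((tau - 1) * u) else rho tau (- u))"
        using 3 by (simp add: rho_def algebra_simps)
    qed simp
  qed
qed

definition Kset :: "real \<Rightarrow> (nat \<Rightarrow> real) \<Rightarrow> (nat \<Rightarrow> real ^ 'k) \<Rightarrow> nat set \<Rightarrow> (real ^ 'k) set" where
  "Kset tau c G A = {(\<Sum>i\<in>A. (c i * s i) *\<^sub>R G i) | s. \<forall>i\<in>A. tau - 1 \<le> s i \<and> s i \<le> tau}"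

lemma Kset_insert:
  assumes "j \<notin> A" "finite A"
  shows "Kset tau c G (insert j A) = {x + y | x y. x \<in> (\<lambda>t. t *\<^sub>R (c j *\<^sub>R G j)) ` {tau - 1..tau} \<and> y \<in> Kset tau c G A}"
proof (intro equalityI subsetI)
  fix z assume "z \<in> Kset tau c G (insert j A)"
  then obtain s where s: "\<forall>i\<in>insert j A. tau - 1 \<le> s i \<and> s i \<le> tau"
    and z: "z = (\<Sum>i\<in>insert j A. (c i * s i) *\<^sub>R G i)" unfolding Kset_def by blast
  have "z = s j *\<^sub>R (c j *\<^sub>R G j) + (\<Sum>i\<in>A. (c i * s i) *\<^sub>R G i)"
    using z assms by (simp add: sum.insert)
  then show "z \<in> {x + y | x y. x \<in> (\<lambda>t. t *\<^sub>R (c j *\<^sub>R G j)) ` {tau - 1..tau} \<and> y \<in> Kset tau c G A}"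
    using s unfolding Kset_def by fastforce
next
  fix z assume "z \<in> {x + y | x y. x \<in> (\<lambda>t. t *\<^sub>R (c j *\<^sub>R G j)) ` {tau - 1..tau} \<and> y \<in> Kset tau c G A}"
  then obtain t s where t: "t \<in> {tau - 1..tau}" and s: "\<forall>i\<in>A. tau - 1 \<le> s i \<and> s i \<le> tau"
    and z: "z = t *\<^sub>R (c j *\<^sub>R G j) + (\<Sum>i\<in>A. (c i * s i) *\<^sub>R G i)" unfolding Kset_def by blast
  define s' where "s' = s(j := t)"
  have "(\<Sum>i\<in>A. (c i * s' i) *\<^sub>R G i) = (\<Sum>i\<in>A. (c i * s i) *\<^sub>R G i)"
    using assms(1) by (intro sum.cong) (auto simp: s'_def)
  then have "z = (\<Sum>i\<in>insert j A. (c i * s' i) *\<^sub>R G i)"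
    using z assms by (simp add: sum.insert s'_def)
  moreover have "\<forall>i\<in>insert j A. tau - 1 \<le> s' i \<and> s' i \<le> tau" using s t by (auto simp: s'_def)
  ultimately show "z \<in> Kset tau c G (insert j A)" unfolding Kset_def by blast
qed

lemma Kset_cc:
  assumes "finite A"
  shows "compact (Kset tau c G A) \<and> convex (Kset tau c G A)"
  using assms
proof (induction A rule: finite_induct)
  case empty
  have "Kset tau c G {} = {0}" unfolding Kset_def by auto
  then show ?case by simp
next
  case (insert j A)
  let ?S = "(\<lambda>t. t *\<^sub>R (c j *\<^sub>R G j)) ` {tau - 1..tau}"
  have lin: "linear (\<lambda>t::real. t *\<^sub>R (c j *\<^sub>R G j))" by (rule bounded_linear.linear[OF bounded_linear_scaleR_left])
  have S1: "compact ?S"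
    by (intro compact_continuous_image continuous_intros) simp
  have S2: "convex ?S"
    using convex_linear_image[OF lin, of "{tau-1..tau}"] by simp
  note S = S1 S2
  have eq: "{x + y | x y. x \<in> ?S \<and> y \<in> Kset tau c G A} = (\<Union>x\<in> ?S. \<Union>y \<in> Kset tau c G A. {x + y})"
    by blast
  show ?case unfolding Kset_insert[OF insert(2,1)]
    using compact_sums[OF S(1) insert.IH[THEN conjunct1]] convex_sums[OF S(2) insert.IH[THEN conjunct2]]
    eq by simp
qed

lemma kkt:
  fixes G :: "nat \<Rightarrow> real ^ 'k" and r c :: "nat \<Rightarrow> real" and tau :: real
  assumes c: "\<forall>i<n. c i \<ge> 0"
    and minim: "\<forall>d::real ^ 'k. (\<Sum>i<n. c i * rho tau (r i)) \<le> (\<Sum>i<n. c i * rho tau (r i - d \<bullet> G i))"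
  shows "\<exists>s. (\<forall>i<n. tau - 1 \<le> s i \<and> s i \<le> tau \<and> (r i > 0 \<longrightarrow> s i = tau) \<and> (r i < 0 \<longrightarrow> s i = tau - 1))
     \<and> (\<Sum>i<n. (c i * s i) *\<^sub>R G i) = 0"
proof -
  define T where "T = {i. i < n \<and> r i = 0}"
  define N where "N = {i. i < n \<and> r i \<noteq> 0}"
  define psi where "psi i = (if r i > 0 then tau else tau - 1)" for i
  define b where "b = (\<Sum>i\<in>N. (c i * psi i) *\<^sub>R G i)"
  have fin: "finite T" "finite N" unfolding T_def N_def by auto
  have split: "{..<n} = T \<union> N" "T \<inter> N = {}" unfolding T_def N_def by auto
  have mem: "- b \<in> Kset tau c G T"
  proof (rule ccontr)
    assume nm: "- b \<notin> Kset tau c G T"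
    have cc: "convex (Kset tau c G T)" "closed (Kset tau c G T)"
      using Kset_cc[OF fin(1)] compact_imp_closed by auto
    obtain a beta where a1: "a \<bullet> (- b) < beta" and a2: "\<forall>x\<in>Kset tau c G T. beta < a \<bullet> x"
      using separating_hyperplane_closed_point[OF cc nm] by blast
    define D where "D i = (if r i > 0 then - (tau * (a \<bullet> G i)) else if r i < 0 then - ((tau - 1) * (a \<bullet> G i))
        else rho tau (- (a \<bullet> G i)))" for i
    have ev: "eventually (\<lambda>t. \<forall>i\<in>{..<n}. rho tau (r i - t * (a \<bullet> G i)) = rho tau (r i) + t * D i) (at_right 0)"
      unfolding D_def by (intro eventually_ball_finite ballI finite_lessThan rho_dir)
    then obtain b0 :: real where b0: "b0 > 0"
      and hb: "\<forall>y>0. y < b0 \<longrightarrow> (\<forall>i\<in>{..<n}. rho tau (r i - y * (a \<bullet> G i)) = rho tau (r i) + y * D i)"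
      unfolding eventually_at_right_field by blast
    define t where "t = b0 / 2"
    have t: "t > 0" "t < b0" using b0 by (auto simp: t_def)
    have "(\<Sum>i<n. c i * rho tau (r i - (t *\<^sub>R a) \<bullet> G i)) = (\<Sum>i<n. c i * rho tau (r i) + t * (c i * D i))"
      using hb t by (intro sum.cong) (auto simp: algebra_simps)
    also have "\<dots> = (\<Sum>i<n. c i * rho tau (r i)) + t * (\<Sum>i<n. c i * D i)"
      by (simp add: sum.distrib sum_distrib_left)
    finally have "0 \<le> t * (\<Sum>i<n. c i * D i)" using minim[rule_format, of "t *\<^sub>R a"] by linarith
    then have ge: "0 \<le> (\<Sum>i<n. c i * D i)" using t(1) by (simp add: zero_le_mult_iff)
    define ss where "ss i = tau - (if - (a \<bullet> G i) < 0 then 1 else 0)" for i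
    define xs where "xs = (\<Sum>i\<in>T. (c i * ss i) *\<^sub>R G i)"
    have xsK: "xs \<in> Kset tau c G T" unfolding xs_def Kset_def ss_def by auto
    have sN: "(\<Sum>i\<in>N. c i * D i) = - (a \<bullet> b)"
      unfolding b_def inner_sum_right
      by (simp add: sum_negf[symmetric] D_def psi_def N_def, intro sum.cong) auto
    have sT: "(\<Sum>i\<in>T. c i * D i) = - (a \<bullet> xs)"
      unfolding xs_def inner_sum_right
      by (simp add: sum_negf[symmetric] D_def ss_def T_def rho_def, intro sum.cong) auto
    have "(\<Sum>i<n. c i * D i) = (\<Sum>i\<in>T. c i * D i) + (\<Sum>i\<in>N. c i * D i)"
      unfolding split(1) by (rule sum.union_disjoint[OF fin split(2)])
    also have "\<dots> = a \<bullet> (- b) - a \<bullet> xs" using sT sN by simp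
    also have "\<dots> < 0" using a1 a2 xsK by fastforce
    finally show False using ge by linarith
  qed
  then obtain s where s: "\<forall>i\<in>T. tau - 1 \<le> s i \<and> s i \<le> tau"
    and sb: "(\<Sum>i\<in>T. (c i * s i) *\<^sub>R G i) = - b"
    unfolding Kset_def by auto
  define s' where "s' i = (if r i = 0 then s i else psi i)" for i
  have "(\<Sum>i<n. (c i * s' i) *\<^sub>R G i) = (\<Sum>i\<in>T. (c i * s' i) *\<^sub>R G i) + (\<Sum>i\<in>N. (c i * s' i) *\<^sub>R G i)"
    unfolding split(1) by (rule sum.union_disjoint[OF fin split(2)])
  also have "(\<Sum>i\<in>T. (c i * s' i) *\<^sub>R G i) = (\<Sum>i\<in>T. (c i * s i) *\<^sub>R G i)"
    by (intro sum.cong) (auto simp: s'_def T_def)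
  also have "(\<Sum>i\<in>N. (c i * s' i) *\<^sub>R G i) = b"
    unfolding b_def by (intro sum.cong) (auto simp: s'_def N_def)
  finally have "(\<Sum>i<n. (c i * s' i) *\<^sub>R G i) = 0" using sb by simp
  moreover have "\<forall>i<n. tau - 1 \<le> s' i \<and> s' i \<le> tau \<and> (r i > 0 \<longrightarrow> s' i = tau) \<and> (r i < 0 \<longrightarrow> s' i = tau - 1)"
    using s by (auto simp: s'_def psi_def T_def)
  ultimately show ?thesis by blast
qed

lemma Pn_real: "Pn n (f :: nat \<Rightarrow> real) = (\<Sum>i<n. f i) / real n"
  unfolding Pn_def by simp

lemma Pn_cong: "(\<And>i. i < n \<Longrightarrow> f i = h i) \<Longrightarrow> Pn n f = Pn n h"
  unfolding Pn_def by (metis lessThan_iff sum.cong)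

lemma Pn_add: "Pn n (\<lambda>i. (f i :: real) + h i) = Pn n f + Pn n h"
  unfolding Pn_real by (simp add: sum.distrib add_divide_distrib)

lemma Pn_mono: "(\<And>i. i < n \<Longrightarrow> (f i :: real) \<le> h i) \<Longrightarrow> Pn n f \<le> Pn n h"
  unfolding Pn_real by (intro divide_right_mono sum_mono) auto

lemma Pn_nonneg: "(\<And>i. i < n \<Longrightarrow> (f i :: real) \<ge> 0) \<Longrightarrow> Pn n f \<ge> 0"
  unfolding Pn_real by (intro divide_nonneg_nonneg sum_nonneg) auto

lemma Pn_inner: "(\<gamma> :: real ^ 'k) \<bullet> Pn n (\<lambda>i. f i *\<^sub>R v i) = Pn n (\<lambda>i. (\<gamma> \<bullet> v i) * f i)"
  unfolding Pn_def by (simp add: inner_sum_right mult.commute)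

lemma numer:
  fixes G :: "nat \<Rightarrow> real ^ 'k"
  assumes CON: "Pn n (\<lambda>i. (Z i / eb i) *\<^sub>R G i) = Pn n (\<lambda>i. (Z i / e i) *\<^sub>R G i)"
  shows "Pn n (\<lambda>i. Y i * Z i / eb i) = Pn n (\<lambda>i. (Y i - \<gamma> \<bullet> G i) * Z i / eb i) + Pn n (\<lambda>i. (\<gamma> \<bullet> G i) * Z i / e i)"
proof -
  have "Pn n (\<lambda>i. Y i * Z i / eb i) = Pn n (\<lambda>i. (Y i - \<gamma> \<bullet> G i) * Z i / eb i + (\<gamma> \<bullet> G i) * (Z i / eb i))"
    by (intro Pn_cong) (simp add: algebra_simps add_divide_distrib diff_divide_distrib)
  also have "\<dots> = Pn n (\<lambda>i. (Y i - \<gamma> \<bullet> G i) * Z i / eb i) + \<gamma> \<bullet> Pn n (\<lambda>i. (Z i / eb i) *\<^sub>R G i)"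
    by (simp add: Pn_add Pn_inner)
  also have "\<gamma> \<bullet> Pn n (\<lambda>i. (Z i / eb i) *\<^sub>R G i) = Pn n (\<lambda>i. (\<gamma> \<bullet> G i) * Z i / e i)"
    unfolding CON Pn_inner by (intro Pn_cong) simp
  finally show ?thesis .
qed

lemma eset_q:
  fixes eb e L :: real
  assumes L: "L \<ge> 1" and e: "0 < e" "e < 1"
    and h1: "inverse L \<le> (eb / (1 - eb)) / (e / (1 - e))" and h2: "(eb / (1 - eb)) / (e / (1 - e)) \<le> L"
  shows "0 < eb \<and> eb < 1 \<and> (\<exists>q. inverse L \<le> q \<and> q \<le> L \<and> 1 / eb = 1 + q * (1 - e) / e)"
proof -
  define R where "R = (eb / (1 - eb)) / (e / (1 - e))"
  define od where "od = e / (1 - e)"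
  have opos: "od > 0" unfolding od_def using e by simp
  have iL: "inverse L > 0" using L by simp
  have h1': "inverse L \<le> R" using h1 unfolding R_def .
  have h2': "R \<le> L" using h2 unfolding R_def .
  have Rpos: "R > 0" using h1' iL by linarith
  have eo: "eb / (1 - eb) = R * od"
    unfolding R_def od_def[symmetric] using opos by simp
  have pos: "eb / (1 - eb) > 0" unfolding eo using Rpos opos by (rule mult_pos_pos)
  then have eb: "0 < eb" "eb < 1"
    by (auto simp: zero_less_divide_iff)
  define q where "q = 1 / R"
  have q1: "q \<le> L" using le_imp_inverse_le[OF h1' iL] unfolding q_def by (simp add: inverse_eq_divide)
  have q2: "inverse L \<le> q" using le_imp_inverse_le[OF h2' Rpos] unfolding q_def by (simp add: inverse_eq_divide)
  have "1 / eb = 1 + (1 - eb) / eb" using eb by (simp add: field_simps)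
  also have "(1 - eb) / eb = 1 / (eb / (1 - eb))" by simp
  also have "\<dots> = 1 / (R * od)" unfolding eo ..
  also have "\<dots> = q * (1 / od)" unfolding q_def by simp
  also have "1 / od = (1 - e) / e" unfolding od_def by simp
  finally have "1 / eb = 1 + q * (1 - e) / e" by simp
  then show ?thesis using eb q1 q2 by blast
qed

lemma eset_conv:
  fixes q e L :: real
  assumes L: "L \<ge> 1" and e: "0 < e" "e < 1" and q: "inverse L \<le> q" "q \<le> L"
  defines "eb \<equiv> 1 / (1 + q * (1 - e) / e)"
  shows "inverse L \<le> (eb / (1 - eb)) / (e / (1 - e)) \<and> (eb / (1 - eb)) / (e / (1 - e)) \<le> L"
proof -
  have iL: "inverse L > 0" using L by simp
  have qpos: "q > 0" using q iL by linarith
  define a where "a = q * (1 - e) / e"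
  have apos: "a > 0" unfolding a_def using e qpos by simp
  have eb': "eb = 1 / (1 + a)" by (simp add: eb_def a_def)
  have "1 - 1 / (1 + a) = a / (1 + a)" using apos by (simp add: field_simps)
  then have "1 - eb = a / (1 + a)" using eb' by simp
  moreover note eb' 
  ultimately have "eb / (1 - eb) = (1 / (1 + a)) / (a / (1 + a))" by simp
  also have "\<dots> = 1 / a" using apos by (simp add: field_simps)
  finally have "eb / (1 - eb) = 1 / a" .
  then have "(eb / (1 - eb)) / (e / (1 - e)) = (1 / a) / (e / (1 - e))" by simp
  also have "\<dots> = 1 / q" unfolding a_def using e qpos by (simp add: field_simps)
  finally have "(eb / (1 - eb)) / (e / (1 - e)) = 1 / q" .
  moreover have "inverse L \<le> 1 / q" using le_imp_inverse_le[OF q(2) qpos] by (simp add: inverse_eq_divide)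
  moreover have "1 / q \<le> L" using le_imp_inverse_le[OF q(1) iL] by (simp add: inverse_eq_divide)
  ultimately show ?thesis by simp
qed

lemma perterm_le:
  fixes r q e L :: real
  assumes L: "L \<ge> 1" and e: "0 < e" "e < 1" and q: "inverse L \<le> q" "q \<le> L"
  shows "r * (1 + q * (1 - e) / e) \<le> r * (1 + L powr sgn r * (1 - e) / e)"
proof -
  have k: "(1 - e) / e \<ge> 0" using e by simp
  consider "r > 0" | "r < 0" | "r = 0" by linarith
  then show ?thesis
  proof cases
    case 1
    have "q * ((1 - e) / e) \<le> L * ((1 - e) / e)" using q k by (intro mult_right_mono) auto
    then show ?thesis using 1 L by (simp add: mult_left_mono)
  next
    case 2
    have "inverse L * ((1 - e) / e) \<le> q * ((1 - e) / e)" using q k by (intro mult_right_mono) auto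
    moreover have "L powr sgn r = inverse L" using 2 L by (simp add: powr_minus)
    ultimately show ?thesis using 2 by (simp add: mult_left_mono_neg)
  qed simp
qed

lemma perterm_eq:
  fixes r q e L :: real
  assumes L: "L \<ge> 1" and q: "r > 0 \<longrightarrow> q = L" "r < 0 \<longrightarrow> q = inverse L"
  shows "r * (1 + q * (1 - e) / e) = r * (1 + L powr sgn r * (1 - e) / e)"
proof -
  consider "r > 0" | "r < 0" | "r = 0" by linarith
  then show ?thesis
  proof cases
    case 1 then show ?thesis using q L by simp
  next
    case 2 then show ?thesis using q L by (simp add: powr_minus)
  qed simp
qed

lemma qbounds:
  fixes L s :: real
  assumes L: "L \<ge> 1" and s: "L / (L + 1) - 1 \<le> s" "s \<le> L / (L + 1)"
  shows "inverse L \<le> 1 + s * ((L * L - 1) / L) \<and> 1 + s * ((L * L - 1) / L) \<le> L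
     \<and> (s = L / (L + 1) \<longrightarrow> 1 + s * ((L * L - 1) / L) = L)
     \<and> (s = L / (L + 1) - 1 \<longrightarrow> 1 + s * ((L * L - 1) / L) = inverse L)"
proof -
  have K: "(L * L - 1) / L \<ge> 0" using mult_mono[OF L L] L by simp  
  have fac: "L * L - 1 = (L - 1) * (L + 1)" by (simp add: algebra_simps)
  have Lp: "L > 0" "L + 1 > 0" "1 + L > 0" "L + L * L > 0" "L * L + L > 0" using L by (auto simp: add_pos_pos)
  have "L / (L + 1) * ((L - 1) * (L + 1) / L) = L - 1" using Lp by (simp add: field_simps)
  then have top: "1 + L / (L + 1) * ((L * L - 1) / L) = L" unfolding fac by simp
  have m1: "L / (L + 1) - 1 = - 1 / (L + 1)" using Lp by (simp add: field_simps)
  have "- 1 / (L + 1) * ((L - 1) * (L + 1) / L) = 1 / L - 1" using Lp by (simp add: field_simps)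
  then have bot: "1 + (L / (L + 1) - 1) * ((L * L - 1) / L) = inverse L"
    unfolding fac m1 by (simp add: inverse_eq_divide)
  have "s * ((L * L - 1) / L) \<le> L / (L + 1) * ((L * L - 1) / L)" using s K by (intro mult_right_mono) auto
  moreover have "(L / (L + 1) - 1) * ((L * L - 1) / L) \<le> s * ((L * L - 1) / L)" using s K by (intro mult_right_mono) auto
  ultimately show ?thesis using top bot by auto
qed

theorem proposition6:
  fixes n :: nat
    and X :: "nat \<Rightarrow> real ^ 'd"
    and Y Z :: "nat \<Rightarrow> real"
    and ehat :: "real ^ 'd \<Rightarrow> real"
    and g :: "real ^ 'd \<Rightarrow> real ^ 'k"
    and Lam :: real
    and gammahat :: "real ^ 'k"
  assumes Lam: "Lam \<ge> 1"
    and Zbin: "\<forall>i<n. Z i \<in> {0, 1}"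
    and ehat_range: "\<forall>i<n. ehat (X i) \<in> {0<..<1}"
    and intercept: "\<exists>j. \<forall>x. g x $ j = 1"
    and gammahat_min: "\<forall>gamma. Ln n (Lam / (Lam + 1)) ehat g X Y Z gammahat
                                 \<le> Ln n (Lam / (Lam + 1)) ehat g X Y Z gamma"
  defines "obj \<equiv> \<lambda>ebar. Pn n (\<lambda>i. Y i * Z i / ebar i) / Pn n (\<lambda>i. Z i / ehat (X i))"
    and "feasible \<equiv> {ebar \<in> Eset n Lam (\<lambda>i. ehat (X i)).
            Pn n (\<lambda>i. (Z i / ebar i) *\<^sub>R g (X i)) = Pn n (\<lambda>i. (Z i / ehat (X i)) *\<^sub>R g (X i))}"
    and "val \<equiv> (Pn n (\<lambda>i. (Y i - gammahat \<bullet> g (X i)) * Z i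
                     * (1 + Lam powr sgn (Y i - gammahat \<bullet> g (X i)) * (1 - ehat (X i)) / ehat (X i)))
               + Pn n (\<lambda>i. (gammahat \<bullet> g (X i)) * Z i / ehat (X i)))
             / Pn n (\<lambda>i. Z i / ehat (X i))"
  shows "(\<exists>ebar \<in> feasible. obj ebar = val) \<and> (\<forall>ebar \<in> feasible. obj ebar \<le> val)"
proof -
  define L where "L = Lam"
  define tau where "tau = Lam / (Lam + 1)"
  define e where "e i = ehat (X i)" for i
  define G where "G i = g (X i)" for i
  define r where "r i = Y i - gammahat \<bullet> G i" for i
  define c where "c i = Z i * (1 - e i) / e i" for i
  have eR: "\<And>i. i < n \<Longrightarrow> 0 < e i \<and> e i < 1" using ehat_range unfolding e_def by auto
  have Zb: "\<And>i. i < n \<Longrightarrow> Z i = 0 \<or> Z i = 1" using Zbin by auto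
  define Dn where "Dn = Pn n (\<lambda>i. Z i / ehat (X i))"
  have Dn: "Dn \<ge> 0" unfolding Dn_def
    by (intro Pn_nonneg) (use eR Zb in \<open>fastforce simp: e_def\<close>)
  define num where "num = Pn n (\<lambda>i. (Y i - gammahat \<bullet> g (X i)) * Z i
                     * (1 + Lam powr sgn (Y i - gammahat \<bullet> g (X i)) * (1 - ehat (X i)) / ehat (X i)))
               + Pn n (\<lambda>i. (gammahat \<bullet> g (X i)) * Z i / ehat (X i))"
  have val: "val = num / Dn" unfolding val_def num_def Dn_def ..
  have objD: "obj eb = Pn n (\<lambda>i. Y i * Z i / eb i) / Dn" for eb unfolding obj_def Dn_def ..
  have numer': "Pn n (\<lambda>i. Y i * Z i / eb i) = Pn n (\<lambda>i. r i * Z i / eb i) + Pn n (\<lambda>i. (gammahat \<bullet> g (X i)) * Z i / ehat (X i))"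
    if "eb \<in> feasible" for eb
  proof -
    have CON: "Pn n (\<lambda>i. (Z i / eb i) *\<^sub>R G i) = Pn n (\<lambda>i. (Z i / e i) *\<^sub>R G i)"
      using that unfolding feasible_def G_def e_def by auto
    show ?thesis using numer[OF CON, of Y gammahat] unfolding r_def G_def e_def .
  qed
  have upper: "obj eb \<le> val" if feas: "eb \<in> feasible" for eb
  proof -
    have ES: "eb \<in> Eset n Lam (\<lambda>i. ehat (X i))" using feas unfolding feasible_def by auto
    have trm: "r i * Z i / eb i \<le> (Y i - gammahat \<bullet> g (X i)) * Z i
                     * (1 + Lam powr sgn (Y i - gammahat \<bullet> g (X i)) * (1 - ehat (X i)) / ehat (X i))"
      if i: "i < n" for i
    proof -
      have h: "inverse Lam \<le> (eb i / (1 - eb i)) / (e i / (1 - e i))"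
              "(eb i / (1 - eb i)) / (e i / (1 - e i)) \<le> Lam"
        using ES i unfolding Eset_def e_def by auto
      obtain q where q: "inverse Lam \<le> q" "q \<le> Lam" "1 / eb i = 1 + q * (1 - e i) / e i"
        using eset_q[OF Lam _ _ h] eR[OF i] by blast
      have "r i * Z i / eb i = Z i * (r i * (1 / eb i))" by simp
      also have "\<dots> = Z i * (r i * (1 + q * (1 - e i) / e i))" unfolding q(3) ..
      also have "\<dots> \<le> Z i * (r i * (1 + Lam powr sgn (r i) * (1 - e i) / e i))"
      proof -
        have pl: "r i * (1 + q * (1 - e i) / e i) \<le> r i * (1 + Lam powr sgn (r i) * (1 - e i) / e i)"
          using perterm_le[OF Lam _ _ q(1,2), of "e i" "r i"] eR[OF i] by auto
        show ?thesis by (rule mult_left_mono[OF pl]) (use Zb[OF i] in auto)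
      qed
      finally show ?thesis unfolding r_def G_def e_def by (simp add: algebra_simps)
    qed
    have "Pn n (\<lambda>i. Y i * Z i / eb i) \<le> num"
      unfolding numer'[OF feas] num_def using trm by (intro add_right_mono Pn_mono) auto
    then show ?thesis unfolding objD val using Dn by (rule divide_right_mono)
  qed
  have minim: "\<forall>d::real ^ 'k. (\<Sum>i<n. c i * rho tau (r i)) \<le> (\<Sum>i<n. c i * rho tau (r i - d \<bullet> G i))"
  proof
    fix d :: "real ^ 'k"
    have "Ln n (Lam / (Lam + 1)) ehat g X Y Z gammahat \<le> Ln n (Lam / (Lam + 1)) ehat g X Y Z (gammahat + d)"
      using gammahat_min by blast
    then have "(\<Sum>i<n. c i * rho tau (r i)) / real n \<le> (\<Sum>i<n. c i * rho tau (r i - d \<bullet> G i)) / real n"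
      unfolding Ln_def Pn_real c_def r_def G_def e_def tau_def
      by (simp add: inner_add_left algebra_simps)
    then show "(\<Sum>i<n. c i * rho tau (r i)) \<le> (\<Sum>i<n. c i * rho tau (r i - d \<bullet> G i))"
      by (cases "n = 0") (auto simp: divide_le_cancel)
  qed
  have cnn: "\<forall>i<n. c i \<ge> 0" unfolding c_def using eR Zb by fastforce
  obtain s where s: "\<forall>i<n. tau - 1 \<le> s i \<and> s i \<le> tau \<and> (r i > 0 \<longrightarrow> s i = tau) \<and> (r i < 0 \<longrightarrow> s i = tau - 1)"
    and ssum: "(\<Sum>i<n. (c i * s i) *\<^sub>R G i) = 0"
    using kkt[OF cnn minim] by blast
  define K where "K = (Lam * Lam - 1) / Lam"
  define q where "q i = 1 + s i * K" for i
  define eb where "eb i = 1 / (1 + q i * (1 - e i) / e i)" for i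
  have qb: "inverse Lam \<le> q i \<and> q i \<le> Lam \<and> (r i > 0 \<longrightarrow> q i = Lam) \<and> (r i < 0 \<longrightarrow> q i = inverse Lam)"
    if i: "i < n" for i
    using qbounds[OF Lam, of "s i"] s i unfolding q_def K_def tau_def by auto
  have qpos: "q i > 0" if "i < n" for i
    using qb[OF that] Lam by (meson inverse_positive_iff_positive less_le_trans zero_less_one order_less_le_trans)
  have ebinv: "1 / eb i = 1 + q i * (1 - e i) / e i" if "i < n" for i
  proof -
    have "1 + q i * (1 - e i) / e i > 0" using qpos[OF that] eR[OF that] by (simp add: add_pos_nonneg)
    then show ?thesis unfolding eb_def by simp
  qed
  have ZE: "Z i / eb i = Z i / e i + K * (c i * s i)" if i: "i < n" for i
  proof -
    have "Z i / eb i = Z i * (1 / eb i)" by simp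
    also have "\<dots> = Z i * (1 + q i * (1 - e i) / e i)" using ebinv[OF i] by simp
    also have "\<dots> = Z i / e i + K * (c i * s i)" unfolding q_def c_def using eR[OF i]
      by (simp add: field_simps)
    finally show ?thesis .
  qed
  have ebE: "eb \<in> Eset n Lam (\<lambda>i. ehat (X i))"
    unfolding Eset_def
  proof (intro CollectI allI impI)
    fix i assume i: "i < n"
    have ebi: "eb i = 1 / (1 + q i * (1 - e i) / e i)" by (simp add: eb_def)
    have "inverse Lam \<le> (eb i / (1 - eb i)) / (e i / (1 - e i)) \<and> (eb i / (1 - eb i)) / (e i / (1 - e i)) \<le> Lam"
      unfolding ebi
      by (rule eset_conv[OF Lam eR[OF i, THEN conjunct1] eR[OF i, THEN conjunct2]
           qb[OF i, THEN conjunct1] qb[OF i, THEN conjunct2, THEN conjunct1]])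
    then show "inverse Lam \<le> eb i / (1 - eb i) / (ehat (X i) / (1 - ehat (X i))) \<and>
          eb i / (1 - eb i) / (ehat (X i) / (1 - ehat (X i))) \<le> Lam"
      unfolding e_def .
  qed
  have CON: "Pn n (\<lambda>i. (Z i / eb i) *\<^sub>R g (X i)) = Pn n (\<lambda>i. (Z i / ehat (X i)) *\<^sub>R g (X i))"
  proof -
    have "(\<Sum>i<n. (Z i / eb i) *\<^sub>R g (X i)) = (\<Sum>i<n. (Z i / e i) *\<^sub>R G i + K *\<^sub>R ((c i * s i) *\<^sub>R G i))"
      using ZE by (intro sum.cong) (auto simp: G_def scaleR_add_left)
    also have "\<dots> = (\<Sum>i<n. (Z i / e i) *\<^sub>R G i) + K *\<^sub>R (\<Sum>i<n. (c i * s i) *\<^sub>R G i)"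
      by (simp add: sum.distrib scaleR_sum_right)
    also have "\<dots> = (\<Sum>i<n. (Z i / ehat (X i)) *\<^sub>R g (X i))" unfolding ssum by (simp add: e_def G_def)
    finally show ?thesis unfolding Pn_def by simp
  qed
  have feb: "eb \<in> feasible" unfolding feasible_def using ebE CON by blast
  have "Pn n (\<lambda>i. r i * Z i / eb i) = Pn n (\<lambda>i. (Y i - gammahat \<bullet> g (X i)) * Z i
                     * (1 + Lam powr sgn (Y i - gammahat \<bullet> g (X i)) * (1 - ehat (X i)) / ehat (X i)))"
  proof (rule Pn_cong)
    fix i assume i: "i < n"
    have "r i * Z i / eb i = Z i * (r i * (1 / eb i))" by simp
    also have "\<dots> = Z i * (r i * (1 + q i * (1 - e i) / e i))" unfolding ebinv[OF i] ..
    also have "\<dots> = Z i * (r i * (1 + Lam powr sgn (r i) * (1 - e i) / e i))"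
      using perterm_eq[OF Lam, of "r i" "q i" "e i"] qb[OF i] by simp
    finally show "r i * Z i / eb i = (Y i - gammahat \<bullet> g (X i)) * Z i
                     * (1 + Lam powr sgn (Y i - gammahat \<bullet> g (X i)) * (1 - ehat (X i)) / ehat (X i))"
      unfolding r_def G_def e_def by (simp add: algebra_simps)
  qed
  then have "obj eb = val" unfolding objD val numer'[OF feb] num_def by simp
  then show ?thesis using feb upper by blast
qed

end
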